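(* Let $d\ge 2$. For the Gilbert--Steiner problem in $\mathbb{R}^d$ with cost $c(x)=x^{1/2}$, every branching point of every solution has degree at most $d+1$.
   Context: Let $\mu^+,\mu^-$ be finite measures on $\mathbb{R}^d$ with finite supports and equal total mass. A $(\mu^+,\mu^-)$-flow consists of a finite vertex set $V\subset\mathbb{R}^d$ containing the support of $\mu^+-\mu^-$, a finite set $E$ of unordered pairs $\{x,y\}\subset V$, and non-zero reals $m(x,y)=-m(y,x)$ on edges such that $\mu^+-\mu^-=\sum_{\{x,y\}\in E} m(x,y)(\delta_y-\delta_x)$. The Gilbert functional is $\sum_{\{x,y\}\in E}c(|m(x,y)|)\,|x-y|$; a solution is a flow minimizing it. Branching points are vertices not in $\operatorname{supp}\mu^+\cup\operatorname{supp}\mu^-$. *)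

theory Defs
  imports "HOL-Analysis.Analysis"
begin

text \<open>A finite measure on a space with finite support is represented by its mass
function (nonnegative, finitely supported).\<close>

definition fin_supp_measure :: "('a \<Rightarrow> real) \<Rightarrow> bool" where
  "fin_supp_measure \<mu> \<longleftrightarrow> (\<forall>x. \<mu> x \<ge> 0) \<and> finite {x. \<mu> x \<noteq> 0}"

definition supp :: "('a \<Rightarrow> real) \<Rightarrow> 'a set" where
  "supp \<mu> = {x. \<mu> x \<noteq> 0}"

definition total_mass :: "('a \<Rightarrow> real) \<Rightarrow> real" where
  "total_mass \<mu> = (\<Sum>x\<in>supp \<mu>. \<mu> x)"

definition dirac :: "'a \<Rightarrow> 'a \<Rightarrow> real" where
  "dirac x = (\<lambda>z. if z = x then 1 else 0)"

definition edge_ends :: "'a set \<Rightarrow> 'a \<times> 'a" where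
  "edge_ends e = (SOME p. fst p \<noteq> snd p \<and> e = {fst p, snd p})"

text \<open>The signed measure m(x,y)(\<delta>_y - \<delta>_x) attached to an edge {x,y}; independent of
the orientation chosen, by antisymmetry of m.\<close>
definition edge_measure :: "('a \<Rightarrow> 'a \<Rightarrow> real) \<Rightarrow> 'a set \<Rightarrow> 'a \<Rightarrow> real" where
  "edge_measure m e = (case edge_ends e of (x, y) \<Rightarrow> (\<lambda>z. m x y * (dirac y z - dirac x z)))"

definition is_flow ::
  "('a::metric_space \<Rightarrow> real) \<Rightarrow> ('a \<Rightarrow> real) \<Rightarrow> 'a set \<Rightarrow> 'a set set \<Rightarrow> ('a \<Rightarrow> 'a \<Rightarrow> real) \<Rightarrow> bool" where
  "is_flow \<mu>p \<mu>m V E m \<longleftrightarrow>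
     finite V \<and> supp (\<lambda>z. \<mu>p z - \<mu>m z) \<subseteq> V \<and>
     finite E \<and> (\<forall>e\<in>E. \<exists>x y. x \<in> V \<and> y \<in> V \<and> x \<noteq> y \<and> e = {x, y}) \<and>
     (\<forall>x y. {x, y} \<in> E \<longrightarrow> m x y = - m y x \<and> m x y \<noteq> 0) \<and>
     (\<forall>z. \<mu>p z - \<mu>m z = (\<Sum>e\<in>E. edge_measure m e z))"

definition gilbert :: "(real \<Rightarrow> real) \<Rightarrow> 'a::metric_space set set \<Rightarrow> ('a \<Rightarrow> 'a \<Rightarrow> real) \<Rightarrow> real" where
  "gilbert c E m = (\<Sum>e\<in>E. case edge_ends e of (x, y) \<Rightarrow> c \<bar>m x y\<bar> * dist x y)"

definition is_solution ::
  "(real \<Rightarrow> real) \<Rightarrow> ('a::metric_space \<Rightarrow> real) \<Rightarrow> ('a \<Rightarrow> real) \<Rightarrow> 'a set \<Rightarrow> 'a set set \<Rightarrow> ('a \<Rightarrow> 'a \<Rightarrow> real) \<Rightarrow> bool" where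
  "is_solution c \<mu>p \<mu>m V E m \<longleftrightarrow> is_flow \<mu>p \<mu>m V E m \<and>
     (\<forall>V' E' m'. is_flow \<mu>p \<mu>m V' E' m' \<longrightarrow> gilbert c E m \<le> gilbert c E' m')"

definition branching_point :: "('a \<Rightarrow> real) \<Rightarrow> ('a \<Rightarrow> real) \<Rightarrow> 'a set \<Rightarrow> 'a \<Rightarrow> bool" where
  "branching_point \<mu>p \<mu>m V v \<longleftrightarrow> v \<in> V \<and> v \<notin> supp \<mu>p \<union> supp \<mu>m"

definition degree :: "'a set set \<Rightarrow> 'a \<Rightarrow> nat" where
  "degree E v = card {e\<in>E. v \<in> e}"

end

theory Submission
  imports Defs
begin

lemma la_core:
  fixes x :: "'b \<Rightarrow> 'a::real_inner" and s :: "'b \<Rightarrow> real"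
  assumes fin: "finite N" and w0: "w0 \<in> N"
    and nn: "\<forall>i\<in>N. \<forall>j\<in>N. i \<noteq> j \<longrightarrow> inner (x i) (x j) \<le> 0"
    and neg: "\<forall>i\<in>N. \<forall>j\<in>N. i \<noteq> j \<longrightarrow> s i * s j < 0 \<longrightarrow> inner (x i) (x j) < 0"
    and sz: "\<forall>i\<in>N. s i \<noteq> 0"
    and k: "k \<in> N" "s k * s w0 < 0"
    and sum0: "(\<Sum>i\<in>N - {w0}. c i *\<^sub>R x i) = 0"
  shows "\<forall>i\<in>N - {w0}. c i \<le> 0"
proof (rule ccontr)
  define P where "P = {i\<in>N - {w0}. c i > 0}"
  define Q where "Q = (N - {w0}) - P"
  assume "\<not> (\<forall>i\<in>N - {w0}. c i \<le> 0)"
  then obtain i where iP: "i \<in> P" unfolding P_def by force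
  have finP: "finite P" and finQ: "finite Q" using fin unfolding P_def Q_def by auto
  have split: "(\<Sum>i\<in>N - {w0}. c i *\<^sub>R x i) = (\<Sum>i\<in>P. c i *\<^sub>R x i) + (\<Sum>i\<in>Q. c i *\<^sub>R x i)"
  proof -
    have "P \<subseteq> N - {w0}" unfolding P_def by auto
    from sum.subset_diff[OF this] fin show ?thesis unfolding Q_def by (simp add: add.commute)
  qed
  define y where "y = (\<Sum>i\<in>P. c i *\<^sub>R x i)"
  have y2: "y = (\<Sum>j\<in>Q. (- c j) *\<^sub>R x j)"
    using sum0 split unfolding y_def
    by (simp add: sum_negf add_eq_0_iff)
  have "inner y y = (\<Sum>i\<in>P. \<Sum>j\<in>Q. (c i * (- c j)) * inner (x i) (x j))"
    apply (subst (1) y_def) apply (subst y2)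
    apply (simp add: inner_sum_left inner_sum_right sum_distrib_left mult.assoc)
    apply (subst sum.swap) apply (simp add: sum_negf mult.left_commute)
    done
  also have "\<dots> \<le> 0"
  proof (intro sum_nonpos)
    fix a b assume a: "a \<in> P" and b: "b \<in> Q"
    have "a \<noteq> b" using a b unfolding Q_def by auto
    moreover have "a \<in> N" "b \<in> N" using a b unfolding P_def Q_def by auto
    ultimately have "inner (x a) (x b) \<le> 0" using nn by auto
    moreover have "c a > 0" "c b \<le> 0" using a b unfolding P_def Q_def by auto
    ultimately have i0: "inner (x a) (x b) \<le> 0" and ca: "c a > 0" and cb: "c b \<le> 0" by auto
    have "c a * c b \<le> 0" using ca cb by (simp add: mult_nonneg_nonpos)
    then have "0 \<le> c a * c b * inner (x a) (x b)" using i0 by (simp add: mult_nonpos_nonpos)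
    then show "c a * - c b * inner (x a) (x b) \<le> 0" by simp
  qed
  finally have "inner y y \<le> 0" .
  then have "y = 0" by (metis inner_gt_zero_iff not_le)
  have orth: "inner (x j) (x a) = 0" if j: "j \<in> N" "j \<notin> P" and a: "a \<in> P" for j a
  proof -
    have "0 = inner (x j) y" using \<open>y = 0\<close> by simp
    also have "\<dots> = (\<Sum>b\<in>P. c b * inner (x j) (x b))"
      unfolding y_def by (simp add: inner_sum_right)
    finally have s0: "(\<Sum>b\<in>P. - (c b * inner (x j) (x b))) = 0" by (simp add: sum_negf)
    have "\<forall>b\<in>P. 0 \<le> - (c b * inner (x j) (x b))"
    proof
      fix b assume b: "b \<in> P"
      then have "b \<in> N" "b \<noteq> j" "c b > 0" using j unfolding P_def by auto
      moreover have "inner (x j) (x b) \<le> 0" using nn j \<open>b \<in> N\<close> \<open>b \<noteq> j\<close> by auto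
      ultimately have "c b * inner (x j) (x b) \<le> 0" by (simp add: mult_nonneg_nonpos)
      then show "0 \<le> - (c b * inner (x j) (x b))" by simp
    qed
    then have all0: "\<forall>b\<in>P. - (c b * inner (x j) (x b)) = 0"
      using sum_nonneg_eq_0_iff[OF finP, of "\<lambda>b. - (c b * inner (x j) (x b))"] s0 by fast
    then have "- (c a * inner (x j) (x a)) = 0" using a by fast
    moreover have "c a > 0" using a unfolding P_def by auto
    ultimately show ?thesis by simp
  qed
  have iN: "i \<in> N" "i \<noteq> w0" using iP unfolding P_def by auto
  have w0P: "w0 \<notin> P" unfolding P_def by auto
  show False
  proof (cases "s i * s w0 < 0")
    case True
    then have "inner (x i) (x w0) < 0" using neg iN w0 by auto
    moreover have "inner (x w0) (x i) = 0" using orth[OF w0 w0P iP] .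
    ultimately show False by (simp add: inner_commute)
  next
    case False
    then have "s i * s w0 > 0" using sz iN w0 by (simp add: not_less order.order_iff_strict)
    then have sik: "s i * s k < 0" using k(2)
      by (smt (verit, best) mult_neg_pos mult_pos_neg mult_less_0_iff zero_less_mult_iff)
    have kw: "k \<noteq> w0" using k(2) by (metis mult_less_0_iff not_square_less_zero)
    have ki: "k \<noteq> i" using sik by (metis mult_less_0_iff not_square_less_zero)
    show False
    proof (cases "k \<in> P")
      case True
      have "inner (x k) (x w0) < 0" using neg k kw w0 by auto
      moreover have "inner (x w0) (x k) = 0" using orth[OF w0 w0P True] .
      ultimately show False by (simp add: inner_commute)
    next
      case False
      have "inner (x i) (x k) < 0" using neg iN k ki sik by auto
      moreover have "inner (x k) (x i) = 0" using orth[OF k(1) False iP] .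
      ultimately show False by (simp add: inner_commute)
    qed
  qed
qed

lemma la_card:
  fixes x :: "'b \<Rightarrow> 'a::euclidean_space" and s :: "'b \<Rightarrow> real"
  assumes fin: "finite N" and w0: "w0 \<in> N"
    and nz: "\<forall>i\<in>N. x i \<noteq> 0"
    and nn: "\<forall>i\<in>N. \<forall>j\<in>N. i \<noteq> j \<longrightarrow> inner (x i) (x j) \<le> 0"
    and neg: "\<forall>i\<in>N. \<forall>j\<in>N. i \<noteq> j \<longrightarrow> s i * s j < 0 \<longrightarrow> inner (x i) (x j) < 0"
    and sz: "\<forall>i\<in>N. s i \<noteq> 0"
    and k: "k \<in> N" "s k * s w0 < 0"
  shows "card N \<le> DIM('a) + 1"
proof -
  have inj: "inj_on x N"
  proof (rule inj_onI, rule ccontr)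
    fix i j assume "i \<in> N" "j \<in> N" "x i = x j" "i \<noteq> j"
    then have "inner (x i) (x i) \<le> 0" using nn by metis
    then show False using nz \<open>i \<in> N\<close> by (metis inner_gt_zero_iff not_le)
  qed
  define X where "X = x ` (N - {w0})"
  have finX: "finite X" using fin unfolding X_def by auto
  have injX: "inj_on x (N - {w0})" using inj by (rule inj_on_subset) auto
  have "independent X"
  proof
    assume "dependent X"
    then obtain u where u: "\<exists>v\<in>X. u v \<noteq> 0" "(\<Sum>v\<in>X. u v *\<^sub>R v) = 0"
      using dependent_finite[OF finX] by blast
    define c where "c i = u (x i)" for i
    have s0: "(\<Sum>i\<in>N - {w0}. c i *\<^sub>R x i) = 0"
      using u(2) unfolding X_def c_def by (simp add: sum.reindex[OF injX])
    have s1: "(\<Sum>i\<in>N - {w0}. (- c i) *\<^sub>R x i) = 0"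
      using s0 by (simp add: sum_negf)
    have "\<forall>i\<in>N - {w0}. c i \<le> 0" by (rule la_core[OF fin w0 nn neg sz k s0])
    moreover have "\<forall>i\<in>N - {w0}. - c i \<le> 0" by (rule la_core[OF fin w0 nn neg sz k s1])
    ultimately have "\<forall>i\<in>N - {w0}. c i = 0" by force
    then show False using u(1) unfolding X_def c_def by auto
  qed
  then have "card X \<le> DIM('a)" by (rule independent_card_le)
  moreover have "card X = card N - 1" unfolding X_def using card_image[OF injX] fin w0 by simp
  moreover have "card N \<ge> 1" using fin w0 by (metis card_0_eq empty_iff less_one not_le)
  ultimately show ?thesis by linarith
qed


lemma norm_bound:
  fixes y h :: "'a::real_inner"
  assumes y: "y \<noteq> 0" and t: "t \<ge> 0" and th: "t * norm h \<le> norm y / 2"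
  shows "norm (y - t *\<^sub>R h) \<le> norm y - t * (inner y h / norm y) + t\<^sup>2 * ((norm h)\<^sup>2 / norm y)"
proof -
  define n where "n = norm y"
  define s where "s = inner y h"
  define H where "H = (norm h)\<^sup>2"
  have n0: "n > 0" using y unfolding n_def by simp
  have sle: "s \<le> n * norm h" unfolding s_def n_def by (metis Cauchy_Schwarz_ineq2 abs_le_D1)
  have ts: "t * s \<le> t * (n * norm h)" using sle t by (simp add: mult_left_mono)
  have "t * (n * norm h) = n * (t * norm h)" by simp
  also have "\<dots> \<le> n * (n / 2)" using th n0 unfolding n_def by (simp add: mult_left_mono)
  finally have A: "n\<^sup>2 - 2 * t * s \<ge> 0" using ts by (simp add: power2_eq_square)
  define M where "M = n\<^sup>2 - t * s + t\<^sup>2 * H"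
  have N2: "(norm (y - t *\<^sub>R h))\<^sup>2 = n\<^sup>2 - 2 * t * s + t\<^sup>2 * H"
  proof -
    have "(norm (y - t *\<^sub>R h))\<^sup>2 = inner (y - t *\<^sub>R h) (y - t *\<^sub>R h)" by (rule power2_norm_eq_inner)
    also have "\<dots> = inner y y - 2 * t * inner y h + t\<^sup>2 * inner h h"
      by (simp add: inner_diff_left inner_diff_right inner_commute power2_eq_square algebra_simps)
    also have "\<dots> = n\<^sup>2 - 2 * t * s + t\<^sup>2 * H" by (simp add: n_def s_def H_def dot_square_norm)
    finally show ?thesis .
  qed
  have id: "M\<^sup>2 - n\<^sup>2 * (n\<^sup>2 - 2 * t * s + t\<^sup>2 * H) = t\<^sup>2 * s\<^sup>2 + t^4 * H\<^sup>2 + t\<^sup>2 * H * (n\<^sup>2 - 2 * t * s)"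
    unfolding M_def by (simp add: power2_eq_square power4_eq_xxxx algebra_simps)
  have H0: "H \<ge> 0" unfolding H_def by simp
  have "t\<^sup>2 * H * (n\<^sup>2 - 2 * t * s) \<ge> 0" using A H0 by simp
  moreover have "t\<^sup>2 * s\<^sup>2 \<ge> 0" by simp
  moreover have "t^4 * H\<^sup>2 \<ge> 0" by simp
  moreover have "(n * norm (y - t *\<^sub>R h))\<^sup>2 = n\<^sup>2 * (n\<^sup>2 - 2 * t * s + t\<^sup>2 * H)"
    by (simp add: power_mult_distrib N2)
  ultimately have "M\<^sup>2 \<ge> (n * norm (y - t *\<^sub>R h))\<^sup>2" using id by linarith
  moreover have "M \<ge> 0"
  proof -
    have e: "2 * t * s = 2 * (t * s)" by simp
    have "n\<^sup>2 \<ge> 0" by simp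
    then have "t * s \<le> n\<^sup>2" using A e by linarith
    then show ?thesis unfolding M_def using H0 by (simp add: add_nonneg_nonneg)
  qed
  ultimately have "n * norm (y - t *\<^sub>R h) \<le> M" by (rule power2_le_imp_le)
  then have "norm (y - t *\<^sub>R h) \<le> M / n" using n0 by (simp add: field_simps)
  also have "M / n = n - t * (s / n) + t\<^sup>2 * (H / n)"
    unfolding M_def using n0 by (simp add: field_simps power2_eq_square)
  finally show ?thesis unfolding n_def s_def H_def .
qed

lemma deriv_cond:
  fixes y1 y2 h v :: "'a::real_inner"
  assumes finV: "finite V" and y1: "y1 \<noteq> 0" and y2: "y2 \<noteq> 0"
    and A1: "A1 \<ge> 0" and A2: "A2 \<ge> 0" and h: "h \<noteq> 0"
    and opt: "\<forall>q. v + q \<notin> V \<longrightarrow> A1 * norm y1 + A2 * norm y2 \<le> A1 * norm (y1 - q) + A2 * norm (y2 - q) + C * norm q"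
  shows "A1 * (inner y1 h / norm y1) + A2 * (inner y2 h / norm y2) \<le> C * norm h"
proof (rule ccontr)
  define r1 where "r1 = inner y1 h / norm y1"
  define r2 where "r2 = inner y2 h / norm y2"
  define k1 where "k1 = (norm h)\<^sup>2 / norm y1"
  define k2 where "k2 = (norm h)\<^sup>2 / norm y2"
  define G where "G = A1 * r1 + A2 * r2"
  define D where "D = G - C * norm h"
  define K where "K = A1 * k1 + A2 * k2"
  assume "\<not> ?thesis"
  then have D: "D > 0" unfolding D_def G_def r1_def r2_def by simp
  have K: "K \<ge> 0" unfolding K_def k1_def k2_def using A1 A2 by simp
  have nh: "norm h > 0" using h by simp
  define \<delta> where "\<delta> = min (min (norm y1 / (2 * norm h)) (norm y2 / (2 * norm h))) (D / (K + 1))"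
  have \<delta>: "\<delta> > 0" unfolding \<delta>_def using y1 y2 nh D K by simp
  have fT: "finite ((\<lambda>t. v + t *\<^sub>R h) -` V)"
    by (rule finite_vimageI[OF finV]) (use h in \<open>auto simp: inj_on_def\<close>)
  have "\<not> {0<..<\<delta>} \<subseteq> (\<lambda>t. v + t *\<^sub>R h) -` V"
    using fT infinite_Ioo[OF \<delta>] finite_subset by blast
  then obtain t where "t \<in> {0<..<\<delta>}" "t \<notin> (\<lambda>t. v + t *\<^sub>R h) -` V" by blast
  then have t: "0 < t" "t < \<delta>" "v + t *\<^sub>R h \<notin> V" by auto
  have t1: "t * norm h \<le> norm y1 / 2"
  proof -
    have "t \<le> norm y1 / (2 * norm h)" using t unfolding \<delta>_def by simp
    then show ?thesis using nh by (simp add: field_simps)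
  qed
  have t2: "t * norm h \<le> norm y2 / 2"
  proof -
    have "t \<le> norm y2 / (2 * norm h)" using t unfolding \<delta>_def by simp
    then show ?thesis using nh by (simp add: field_simps)
  qed
  have tK: "t * K < D"
  proof -
    have "t < D / (K + 1)" using t unfolding \<delta>_def by simp
    then have "t * (K + 1) < D" using K by (simp add: field_simps)
    then show ?thesis using t by (simp add: algebra_simps)
  qed
  have b1: "norm (y1 - t *\<^sub>R h) \<le> norm y1 - t * r1 + t\<^sup>2 * k1"
    unfolding r1_def k1_def by (rule norm_bound[OF y1 _ t1]) (use t in simp)
  have b2: "norm (y2 - t *\<^sub>R h) \<le> norm y2 - t * r2 + t\<^sup>2 * k2"
    unfolding r2_def k2_def by (rule norm_bound[OF y2 _ t2]) (use t in simp)
  have c1: "A1 * norm (y1 - t *\<^sub>R h) \<le> A1 * (norm y1 - t * r1 + t\<^sup>2 * k1)"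
    using b1 A1 by (rule mult_left_mono)
  have c2: "A2 * norm (y2 - t *\<^sub>R h) \<le> A2 * (norm y2 - t * r2 + t\<^sup>2 * k2)"
    using b2 A2 by (rule mult_left_mono)
  have o: "A1 * norm y1 + A2 * norm y2 \<le> A1 * norm (y1 - t *\<^sub>R h) + A2 * norm (y2 - t *\<^sub>R h) + C * norm (t *\<^sub>R h)"
    using opt t(3) by blast
  have nt: "norm (t *\<^sub>R h) = t * norm h" using t by simp
  have e: "A1 * (norm y1 - t * r1 + t\<^sup>2 * k1) + A2 * (norm y2 - t * r2 + t\<^sup>2 * k2)
      = A1 * norm y1 + A2 * norm y2 - t * G + t * (t * K)"
    unfolding G_def K_def by (simp add: algebra_simps power2_eq_square)
  have "t * G \<le> t * (t * K) + t * (C * norm h)"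
  proof -
    have o': "A1 * norm y1 + A2 * norm y2 \<le> A1 * norm (y1 - t *\<^sub>R h) + A2 * norm (y2 - t *\<^sub>R h) + C * (t * norm h)"
      using o unfolding nt .
    have "C * (t * norm h) = t * (C * norm h)" by simp
    then show ?thesis using o' c1 c2 e by linarith
  qed
  then have "t * G \<le> t * (t * K + C * norm h)" by (simp add: distrib_left)
  then have "G \<le> t * K + C * norm h" using t mult_le_cancel_left_pos by blast
  then show False using tK unfolding D_def by linarith
qed


lemma edge_ends_pair:
  assumes "x \<noteq> y"
  shows "edge_ends {x, y} = (x, y) \<or> edge_ends {x, y} = (y, x)"
proof -
  have "fst (edge_ends {x,y}) \<noteq> snd (edge_ends {x,y}) \<and> {x,y} = {fst (edge_ends {x,y}), snd (edge_ends {x,y})}"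
    unfolding edge_ends_def by (rule someI[of _ "(x,y)"]) (use assms in simp)
  then show ?thesis by (cases "edge_ends {x,y}") (auto simp: doubleton_eq_iff)
qed

lemma em_pair:
  assumes "x \<noteq> y" "m x y = - m y x"
  shows "edge_measure m {x, y} z = m x y * (dirac y z - dirac x z)"
  using edge_ends_pair[OF assms(1)] assms(2) unfolding edge_measure_def
  by (auto simp: algebra_simps)

lemma em_cong:
  assumes "x \<noteq> y" "m' x y = m x y" "m' y x = m y x"
  shows "edge_measure m' {x, y} = edge_measure m {x, y}"
  using edge_ends_pair[OF assms(1)] assms(2,3) unfolding edge_measure_def
  by auto

lemma gt_pair:
  fixes m :: "'a::metric_space \<Rightarrow> 'a \<Rightarrow> real"
  assumes "x \<noteq> y" "m x y = - m y x"
  shows "(case edge_ends {x, y} of (a, b) \<Rightarrow> c \<bar>m a b\<bar> * dist a b) = c \<bar>m x y\<bar> * dist x y"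
proof -
  have ab: "\<bar>m y x\<bar> = \<bar>m x y\<bar>" using assms(2) by simp
  show ?thesis using edge_ends_pair[OF assms(1)]
  proof
    assume "edge_ends {x, y} = (y, x)"
    then show ?thesis using ab by (simp add: dist_commute)
  qed simp
qed

lemma gt_cong:
  assumes "x \<noteq> y" "m' x y = m x y" "m' y x = m y x"
  shows "(case edge_ends {x, y} of (a, b) \<Rightarrow> c \<bar>m' a b\<bar> * dist a b) =
         (case edge_ends {x, y} of (a, b) \<Rightarrow> c \<bar>m a b\<bar> * dist a b)"
  using edge_ends_pair[OF assms(1)] assms(2,3)
  by auto

lemma perturb:
  fixes m :: "'a::metric_space \<Rightarrow> 'a \<Rightarrow> real"
  assumes sol: "is_solution sqrt \<mu>p \<mu>m V E m"
    and e1: "{v, w1} \<in> E" and e2: "{v, w2} \<in> E" and w12: "w1 \<noteq> w2" and pV: "p \<notin> V"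
  shows "sqrt \<bar>m v w1\<bar> * dist v w1 + sqrt \<bar>m v w2\<bar> * dist v w2
     \<le> sqrt \<bar>m v w1\<bar> * dist p w1 + sqrt \<bar>m v w2\<bar> * dist p w2 + sqrt \<bar>m v w1 + m v w2\<bar> * dist v p"
proof -
  have fl: "is_flow \<mu>p \<mu>m V E m" using sol unfolding is_solution_def by (elim conjE)
  have opt: "\<And>V' E' m'. is_flow \<mu>p \<mu>m V' E' m' \<Longrightarrow> gilbert sqrt E m \<le> gilbert sqrt E' m'"
    using sol unfolding is_solution_def by (elim conjE) blast
  note fl' = fl[unfolded is_flow_def]
  have finV: "finite V" using fl' by (elim conjE)
  have suppV: "supp (\<lambda>z. \<mu>p z - \<mu>m z) \<subseteq> V" using fl' by (elim conjE)
  have finE: "finite E" using fl' by (elim conjE)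
  have edges: "\<forall>e\<in>E. \<exists>x y. x \<in> V \<and> y \<in> V \<and> x \<noteq> y \<and> e = {x, y}" using fl' by (elim conjE)
  have anti: "\<forall>x y. {x, y} \<in> E \<longrightarrow> m x y = - m y x \<and> m x y \<noteq> 0" using fl' by (elim conjE)
  have kir: "\<forall>z. \<mu>p z - \<mu>m z = (\<Sum>e\<in>E. edge_measure m e z)" using fl' by (elim conjE)
  have edge_obt: "\<exists>x y. x \<in> V \<and> y \<in> V \<and> x \<noteq> y \<and> e = {x, y}" if "e \<in> E" for e
    using bspec[OF edges that] .
  have edgeV: "e \<subseteq> V" if eE: "e \<in> E" for e
  proof -
    obtain x y where "x \<in> V" "y \<in> V" "e = {x, y}" using edge_obt[OF eE] by auto
    then show ?thesis by simp
  qed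
  have vw1: "v \<noteq> w1"
  proof
    assume "v = w1"
    then have "{v} \<in> E" using e1 by simp
    then obtain x y where "x \<noteq> y" "{v} = {x, y}" using edge_obt by metis
    then show False by (metis insertCI singletonD)
  qed
  have vw2: "v \<noteq> w2"
  proof
    assume "v = w2"
    then have "{v} \<in> E" using e2 by simp
    then obtain x y where "x \<noteq> y" "{v} = {x, y}" using edge_obt by metis
    then show False by (metis insertCI singletonD)
  qed
  have inV: "v \<in> V" "w1 \<in> V" "w2 \<in> V" using edgeV e1 e2 by auto
  have pv: "p \<noteq> v" "p \<noteq> w1" "p \<noteq> w2" using inV pV by auto
  define a1 where "a1 = m v w1"
  define a2 where "a2 = m v w2"
  have an1: "m v w1 = - m w1 v \<and> m v w1 \<noteq> 0" using anti e1 by blast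
  have an2: "m v w2 = - m w2 v \<and> m v w2 \<noteq> 0" using anti e2 by blast
  have a1: "a1 \<noteq> 0" "m w1 v = - a1" using an1 unfolding a1_def by auto
  have a2: "a2 \<noteq> 0" "m w2 v = - a2" using an2 unfolding a2_def by auto
  define E0 where "E0 = E - {{v, w1}, {v, w2}}"
  define En where "En = {{p, w1}, {p, w2}} \<union> (if a1 + a2 \<noteq> 0 then {{v, p}} else {})"
  define E' where "E' = E0 \<union> En"
  define V' where "V' = insert p V"
  define m' where "m' x y = (if x = p then (if y = w1 then a1 else if y = w2 then a2 else if y = v then - (a1 + a2) else 0)
      else if y = p then (if x = w1 then - a1 else if x = w2 then - a2 else if x = v then a1 + a2 else 0) else m x y)" for x y
  have m'_old: "m' x y = m x y" if "x \<noteq> p" "y \<noteq> p" for x y using that unfolding m'_def by simp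
  have m'1: "m' p w1 = a1" "m' w1 p = - a1" using pv w12 vw1 unfolding m'_def by auto
  have m'2: "m' p w2 = a2" "m' w2 p = - a2" using pv w12 vw2 unfolding m'_def by auto
  have m'3: "m' v p = a1 + a2" "m' p v = - (a1 + a2)" using pv w12 vw1 vw2 unfolding m'_def by auto
  have pE: "p \<notin> e" if "e \<in> E" for e using edgeV[OF that] pV by auto
  have finE0: "finite E0" using finE unfolding E0_def by simp
  have finEn: "finite En" unfolding En_def by simp
  have disj: "E0 \<inter> En = {}" using pE unfolding E0_def En_def by auto
  have sub12: "{{v, w1}, {v, w2}} \<subseteq> E" using e1 e2 by simp
  have ne12: "{v, w1} \<noteq> {v, w2}" using w12 vw1 vw2 by (auto simp: doubleton_eq_iff)
  have E0old: "\<exists>x y. x \<in> V \<and> y \<in> V \<and> x \<noteq> y \<and> e = {x, y} \<and> x \<noteq> p \<and> y \<noteq> p" if "e \<in> E0" for e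
  proof -
    have "e \<in> E" using that unfolding E0_def by simp
    then obtain x y where "x \<in> V" "y \<in> V" "x \<noteq> y" "e = {x, y}" using edge_obt by metis
    then show ?thesis using pV by auto
  qed
  have sumE: "(\<Sum>e\<in>E. f e) = (\<Sum>e\<in>E0. f e) + f {v, w1} + f {v, w2}" for f :: "'a set \<Rightarrow> real"
    using sum.subset_diff[OF sub12 finE, of f] ne12 unfolding E0_def by simp
  have sumE': "(\<Sum>e\<in>E'. f e) = (\<Sum>e\<in>E0. f e) + (\<Sum>e\<in>En. f e)" for f :: "'a set \<Rightarrow> real"
    unfolding E'_def by (rule sum.union_disjoint[OF finE0 finEn disj])
  have n12: "{p, w1} \<noteq> {p, w2}" using w12 by (auto simp: doubleton_eq_iff)
  have n13: "{v, p} \<noteq> {p, w1}" "{v, p} \<noteq> {p, w2}" using vw1 vw2 pv by (auto simp: doubleton_eq_iff)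
  have sumEn: "(\<Sum>e\<in>En. f e) = f {p, w1} + f {p, w2} + (if a1 + a2 \<noteq> 0 then f {v, p} else 0)"
    for f :: "'a set \<Rightarrow> real"
    unfolding En_def using n12 n13 by (auto simp: insert_commute)
  have anti': "m' x y = - m' y x \<and> m' x y \<noteq> 0" if xy: "{x, y} \<in> E'" for x y
  proof (cases "{x, y} \<in> E0")
    case True
    then obtain x' y' where "x' \<noteq> p" "y' \<noteq> p" "{x, y} = {x', y'}" using E0old by blast
    then have "x \<noteq> p" "y \<noteq> p" by (auto simp: doubleton_eq_iff)
    moreover have "{x, y} \<in> E" using True unfolding E0_def by simp
    ultimately have "m x y = - m y x \<and> m x y \<noteq> 0" "x \<noteq> p" "y \<noteq> p" using anti by blast+
    then show ?thesis using m'_old by simp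
  next
    case False
    then have "{x, y} \<in> En" using xy unfolding E'_def by simp
    then have "{x, y} = {p, w1} \<or> {x, y} = {p, w2} \<or> (a1 + a2 \<noteq> 0 \<and> {x, y} = {v, p})"
      unfolding En_def by (auto split: if_splits)
    then show ?thesis using m'1 m'2 m'3 a1 a2 by (auto simp: doubleton_eq_iff)
  qed
  have flow': "is_flow \<mu>p \<mu>m V' E' m'"
    unfolding is_flow_def
  proof (intro conjI allI impI ballI)
    show "finite V'" using finV unfolding V'_def by simp
    show "supp (\<lambda>z. \<mu>p z - \<mu>m z) \<subseteq> V'" using suppV unfolding V'_def by auto
    show "finite E'" using finE0 finEn unfolding E'_def by simp
  next
    fix e assume eE': "e \<in> E'"
    show "\<exists>x y. x \<in> V' \<and> y \<in> V' \<and> x \<noteq> y \<and> e = {x, y}"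
    proof (cases "e \<in> E0")
      case True
      then obtain x y where "x \<in> V" "y \<in> V" "x \<noteq> y" "e = {x, y}" using E0old by metis
      then show ?thesis unfolding V'_def by blast
    next
      case False
      then have "e \<in> En" using eE' unfolding E'_def by simp
      then have "e = {p, w1} \<or> e = {p, w2} \<or> e = {v, p}" unfolding En_def by (auto split: if_splits)
      then show ?thesis unfolding V'_def using pv inV by blast
    qed
  next
    fix x y assume "{x, y} \<in> E'"
    then show "m' x y = - m' y x" using anti' by blast
  next
    fix x y assume "{x, y} \<in> E'"
    then show "m' x y \<noteq> 0" using anti' by blast
  next
    fix z
    have S0: "(\<Sum>e\<in>E0. edge_measure m' e z) = (\<Sum>e\<in>E0. edge_measure m e z)"
    proof (rule sum.cong)
      fix e assume "e \<in> E0"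
      then obtain x y where "x \<noteq> y" "e = {x, y}" "x \<noteq> p" "y \<noteq> p" using E0old by blast
      then show "edge_measure m' e z = edge_measure m e z" using em_cong[of x y m' m] m'_old by simp
    qed simp
    have M1: "edge_measure m' {p, w1} z = a1 * (dirac w1 z - dirac p z)"
      using em_pair[of p w1 m'] m'1 pv by simp
    have M2: "edge_measure m' {p, w2} z = a2 * (dirac w2 z - dirac p z)"
      using em_pair[of p w2 m'] m'2 pv by simp
    have M3: "edge_measure m' {v, p} z = (a1 + a2) * (dirac p z - dirac v z)"
      using em_pair[of v p m'] m'3 pv by simp
    have M4: "edge_measure m {v, w1} z = a1 * (dirac w1 z - dirac v z)"
      using em_pair[of v w1 m] a1 vw1 unfolding a1_def by simp
    have M5: "edge_measure m {v, w2} z = a2 * (dirac w2 z - dirac v z)"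
      using em_pair[of v w2 m] a2 vw2 unfolding a2_def by simp
    have M6: "(if a1 + a2 \<noteq> 0 then edge_measure m' {v, p} z else 0) = (a1 + a2) * (dirac p z - dirac v z)"
      using M3 by auto
    have "(\<Sum>e\<in>E'. edge_measure m' e z) = (\<Sum>e\<in>E. edge_measure m e z)"
      unfolding sumE'[of "\<lambda>e. edge_measure m' e z"] sumE[of "\<lambda>e. edge_measure m e z"]
        sumEn[of "\<lambda>e. edge_measure m' e z"] S0 M1 M2 M6 M4 M5
      by (simp add: algebra_simps)
    then show "\<mu>p z - \<mu>m z = (\<Sum>e\<in>E'. edge_measure m' e z)" using kir by simp
  qed
  have "gilbert sqrt E m \<le> gilbert sqrt E' m'" by (rule opt[OF flow'])
  moreover
  let ?g = "\<lambda>m e. case edge_ends e of (x, y) \<Rightarrow> sqrt \<bar>m x y\<bar> * dist x y"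
  have "(\<Sum>e\<in>E0. ?g m' e) = (\<Sum>e\<in>E0. ?g m e)"
  proof (rule sum.cong)
    fix e assume "e \<in> E0"
    then obtain x y where "x \<noteq> y" "e = {x, y}" "x \<noteq> p" "y \<noteq> p" using E0old by blast
    then show "?g m' e = ?g m e" using gt_cong[of x y m' m sqrt] m'_old by simp
  qed simp
  moreover have "?g m' {p, w1} = sqrt \<bar>a1\<bar> * dist p w1" using gt_pair[of p w1 m' sqrt] m'1 pv by simp
  moreover have "?g m' {p, w2} = sqrt \<bar>a2\<bar> * dist p w2" using gt_pair[of p w2 m' sqrt] m'2 pv by simp
  moreover have "?g m' {v, p} = sqrt \<bar>a1 + a2\<bar> * dist v p" using gt_pair[of v p m' sqrt] m'3 pv by simp
  moreover have "?g m {v, w1} = sqrt \<bar>a1\<bar> * dist v w1" using gt_pair[of v w1 m sqrt] a1 vw1 unfolding a1_def by simp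
  moreover have "?g m {v, w2} = sqrt \<bar>a2\<bar> * dist v w2" using gt_pair[of v w2 m sqrt] a2 vw2 unfolding a2_def by simp
  ultimately show ?thesis
    unfolding gilbert_def sumE'[of "?g m'"] sumE[of "?g m"] sumEn[of "?g m'"] a1_def[symmetric] a2_def[symmetric]
    by (auto split: if_splits)
qed

theorem proposition1:
  fixes \<mu>p \<mu>m :: "real ^ 'n \<Rightarrow> real"
    and V :: "(real ^ 'n) set" and E :: "(real ^ 'n) set set"
    and m :: "real ^ 'n \<Rightarrow> real ^ 'n \<Rightarrow> real" and v :: "real ^ 'n"
  assumes "CARD('n) \<ge> 2"
    and "fin_supp_measure \<mu>p" and "fin_supp_measure \<mu>m"
    and "total_mass \<mu>p = total_mass \<mu>m"
    and "is_solution sqrt \<mu>p \<mu>m V E m"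
    and "branching_point \<mu>p \<mu>m V v"
  shows "degree E v \<le> CARD('n) + 1"
proof -
  note sol = assms(5)
  have fl: "is_flow \<mu>p \<mu>m V E m" using sol unfolding is_solution_def by (elim conjE)
  note fl' = fl[unfolded is_flow_def]
  have finV: "finite V" using fl' by (elim conjE)
  have finE: "finite E" using fl' by (elim conjE)
  have edges: "\<forall>e\<in>E. \<exists>x y. x \<in> V \<and> y \<in> V \<and> x \<noteq> y \<and> e = {x, y}" using fl' by (elim conjE)
  have anti: "\<forall>x y. {x, y} \<in> E \<longrightarrow> m x y = - m y x \<and> m x y \<noteq> 0" using fl' by (elim conjE)
  have kir: "\<forall>z. \<mu>p z - \<mu>m z = (\<Sum>e\<in>E. edge_measure m e z)" using fl' by (elim conjE)
  have edge_obt: "\<exists>x y. x \<in> V \<and> y \<in> V \<and> x \<noteq> y \<and> e = {x, y}" if "e \<in> E" for e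
    using bspec[OF edges that] .
  have v0: "\<mu>p v = 0" "\<mu>m v = 0" using assms(6) unfolding branching_point_def supp_def by auto
  define N where "N = {w. {v, w} \<in> E}"
  have wv: "w \<noteq> v" if "w \<in> N" for w
  proof
    assume "w = v"
    then have "{v} \<in> E" using that unfolding N_def by simp
    then obtain x y where "x \<noteq> y" "{v} = {x, y}" using edge_obt by metis
    then show False by (metis insertCI singletonD)
  qed
  have NV: "N \<subseteq> V"
  proof
    fix w assume "w \<in> N"
    then obtain x y where "x \<in> V" "y \<in> V" "{v, w} = {x, y}" using edge_obt unfolding N_def by blast
    then show "w \<in> V" by (auto simp: doubleton_eq_iff)
  qed
  have finN: "finite N" using NV finV finite_subset by blast
  have injN: "inj_on (\<lambda>w. {v, w}) N"
    by (rule inj_onI) (use wv in \<open>auto simp: doubleton_eq_iff\<close>)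
  have Ev: "{e\<in>E. v \<in> e} = (\<lambda>w. {v, w}) ` N"
  proof
    show "{e\<in>E. v \<in> e} \<subseteq> (\<lambda>w. {v, w}) ` N"
    proof
      fix e assume e: "e \<in> {e\<in>E. v \<in> e}"
      then obtain x y where "e = {x, y}" using edge_obt by blast
      then have "e = {v, if x = v then y else x}" using e by auto
      moreover then have "(if x = v then y else x) \<in> N" using e unfolding N_def by auto
      ultimately show "e \<in> (\<lambda>w. {v, w}) ` N" by blast
    qed
    show "(\<lambda>w. {v, w}) ` N \<subseteq> {e\<in>E. v \<in> e}" unfolding N_def by auto
  qed
  have degN: "degree E v = card N"
    unfolding degree_def Ev using card_image[OF injN] .
  define s where "s w = m v w" for w
  have sz: "\<forall>i\<in>N. s i \<noteq> 0" unfolding s_def N_def using anti by blast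
  show ?thesis
  proof (cases "N = {}")
    case True
    then show ?thesis using degN by simp
  next
    case False
    then obtain w0 where w0: "w0 \<in> N" by blast
    have em0: "edge_measure m e v = 0" if eE: "e \<in> E" and ve: "v \<notin> e" for e
    proof -
      obtain x y where xy: "x \<noteq> y" "e = {x, y}" using edge_obt[OF eE] by blast
      have "m x y = - m y x" using anti eE xy by blast
      then show ?thesis using em_pair[OF xy(1)] xy ve by (simp add: dirac_def)
    qed
    have em1: "edge_measure m {v, w} v = - s w" if wN: "w \<in> N" for w
    proof -
      have "m v w = - m w v" using anti wN unfolding N_def by blast
      then show ?thesis using em_pair[of v w m] wv[OF wN] unfolding s_def by (simp add: dirac_def)
    qed
    have "0 = (\<Sum>e\<in>E. edge_measure m e v)" using spec[OF kir, of v] v0 by simp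
    also have "\<dots> = (\<Sum>e\<in>{e\<in>E. v \<in> e}. edge_measure m e v)"
      by (rule sum.mono_neutral_right) (use finE em0 in auto)
    also have "\<dots> = (\<Sum>w\<in>N. edge_measure m {v, w} v)"
      unfolding Ev by (rule sum.reindex[OF injN, unfolded comp_def])
    also have "\<dots> = (\<Sum>w\<in>N. - s w)" using em1 by simp
    finally have ssum: "(\<Sum>w\<in>N. s w) = 0" by (simp add: sum_negf)
    have "\<exists>k\<in>N. s k * s w0 < 0"
    proof (rule ccontr)
      assume "\<not> ?thesis"
      then have nn: "\<forall>k\<in>N. 0 \<le> s k * s w0" by (simp add: not_less)
      have "(\<Sum>k\<in>N. s k * s w0) = 0" using ssum by (simp add: sum_distrib_right[symmetric])
      then have "\<forall>k\<in>N. s k * s w0 = 0"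
        using sum_nonneg_eq_0_iff[OF finN, of "\<lambda>k. s k * s w0"] nn by fast
      then have "s w0 * s w0 = 0" using w0 by blast
      then show False using sz w0 by simp
    qed
    then obtain k where k: "k \<in> N" "s k * s w0 < 0" by blast
    define x where "x w = (sqrt \<bar>s w\<bar> / norm (w - v)) *\<^sub>R (w - v)" for w
    have nx: "(norm (x w))\<^sup>2 = \<bar>s w\<bar>" if "w \<in> N" for w
    proof -
      have "norm (w - v) \<noteq> 0" using wv[OF that] by simp
      then show ?thesis unfolding x_def by (simp add: power_mult_distrib power_divide)
    qed
    have nz: "\<forall>i\<in>N. x i \<noteq> 0"
    proof
      fix i assume "i \<in> N"
      then have "(norm (x i))\<^sup>2 \<noteq> 0" using nx sz by simp
      then show "x i \<noteq> 0" by auto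
    qed
    have pair: "2 * inner (x i) (x j) \<le> \<bar>s i + s j\<bar> - \<bar>s i\<bar> - \<bar>s j\<bar>"
      if i: "i \<in> N" and j: "j \<in> N" and ij: "i \<noteq> j" for i j
    proof -
      define h where "h = x i + x j"
      have "(norm h)\<^sup>2 \<le> \<bar>s i + s j\<bar>"
      proof (cases "h = 0")
        case True
        then show ?thesis by simp
      next
        case False
        define y1 where "y1 = i - v"
        define y2 where "y2 = j - v"
        define A1 where "A1 = sqrt \<bar>s i\<bar>"
        define A2 where "A2 = sqrt \<bar>s j\<bar>"
        define C where "C = sqrt \<bar>s i + s j\<bar>"
        have ei: "{v, i} \<in> E" and ej: "{v, j} \<in> E" using i j unfolding N_def by auto
        have y1: "y1 \<noteq> 0" and y2: "y2 \<noteq> 0" using wv[OF i] wv[OF j] unfolding y1_def y2_def by auto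
        have opt: "\<forall>q. v + q \<notin> V \<longrightarrow> A1 * norm y1 + A2 * norm y2 \<le> A1 * norm (y1 - q) + A2 * norm (y2 - q) + C * norm q"
        proof (intro allI impI)
          fix q assume q: "v + q \<notin> V"
          have "sqrt \<bar>m v i\<bar> * dist v i + sqrt \<bar>m v j\<bar> * dist v j
             \<le> sqrt \<bar>m v i\<bar> * dist (v + q) i + sqrt \<bar>m v j\<bar> * dist (v + q) j + sqrt \<bar>m v i + m v j\<bar> * dist v (v + q)"
            by (rule perturb[OF sol ei ej ij q])
          moreover have "dist v i = norm y1" "dist v j = norm y2" unfolding y1_def y2_def
            by (simp_all add: dist_norm norm_minus_commute)
          moreover have "dist (v + q) i = norm (y1 - q)" "dist (v + q) j = norm (y2 - q)"
            unfolding y1_def y2_def by (simp_all add: dist_norm norm_minus_commute algebra_simps)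
          moreover have "dist v (v + q) = norm q" by (simp add: dist_norm)
          ultimately show "A1 * norm y1 + A2 * norm y2 \<le> A1 * norm (y1 - q) + A2 * norm (y2 - q) + C * norm q"
            unfolding A1_def A2_def C_def s_def by simp
        qed
        have dc: "A1 * (inner y1 h / norm y1) + A2 * (inner y2 h / norm y2) \<le> C * norm h"
          by (rule deriv_cond[OF finV y1 y2 _ _ False opt]) (simp_all add: A1_def A2_def)
        have "A1 * (inner y1 h / norm y1) + A2 * (inner y2 h / norm y2) = inner (x i) h + inner (x j) h"
          unfolding x_def y1_def y2_def A1_def A2_def by simp
        also have "\<dots> = (norm h)\<^sup>2" unfolding h_def by (simp add: inner_add_left power2_norm_eq_inner)
        finally have "(norm h)\<^sup>2 \<le> C * norm h" using dc by simp
        then have "norm h \<le> C" using False by (simp add: power2_eq_square)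
        then have "(norm h)\<^sup>2 \<le> C\<^sup>2" by (simp add: power_mono)
        then show ?thesis unfolding C_def by simp
      qed
      moreover have "(norm h)\<^sup>2 = \<bar>s i\<bar> + 2 * inner (x i) (x j) + \<bar>s j\<bar>"
        unfolding h_def using nx[OF i] nx[OF j]
        by (simp add: power2_norm_eq_inner inner_add_left inner_add_right inner_commute)
      ultimately show ?thesis by linarith
    qed
    have nn: "\<forall>i\<in>N. \<forall>j\<in>N. i \<noteq> j \<longrightarrow> inner (x i) (x j) \<le> 0"
    proof (intro ballI impI)
      fix i j assume "i \<in> N" "j \<in> N" "i \<noteq> j"
      moreover have "\<bar>s i + s j\<bar> \<le> \<bar>s i\<bar> + \<bar>s j\<bar>" by (rule abs_triangle_ineq)
      ultimately show "inner (x i) (x j) \<le> 0" using pair by fastforce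
    qed
    have neg: "\<forall>i\<in>N. \<forall>j\<in>N. i \<noteq> j \<longrightarrow> s i * s j < 0 \<longrightarrow> inner (x i) (x j) < 0"
    proof (intro ballI impI)
      fix i j assume "i \<in> N" "j \<in> N" "i \<noteq> j" "s i * s j < 0"
      moreover have "\<bar>s i + s j\<bar> < \<bar>s i\<bar> + \<bar>s j\<bar>" using \<open>s i * s j < 0\<close>
        by (auto simp: mult_less_0_iff abs_if)
      ultimately show "inner (x i) (x j) < 0" using pair by fastforce
    qed
    have "card N \<le> DIM(real ^ 'n) + 1"
      by (rule la_card[OF finN w0 nz nn neg sz k])
    then show ?thesis using degN by simp
  qed
qed

end
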